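(* Let $X$ be a real Hilbert space and let $U,V$ be closed linear subspaces of $X$ such that $U\cap V=\{0\}$ and $U+V$ is closed. Then the couple $(U,V)$ is stable.
   Context: $P_C$ is the metric projection onto a closed convex nonempty set $C$; $B_X$ the closed unit ball; $\mathrm{dist}(x,S)=\inf_{s\in S}\|x-s\|$. Attouch–Wets convergence: for nonempty closed $C,D$ and $N\in\mathbb N$ let $e_N(C,D)=\sup_{c\in C\cap NB_X}\mathrm{dist}(c,D)$ ($0$ if $C\cap NB_X=\emptyset$), $h_N(C,D)=\max\{e_N(C,D),e_N(D,C)\}$; $C_j\to C$ if $h_N(C_j,C)\to0$ for every $N$. Given sequences $\{A_n\},\{B_n\}$ of closed convex nonempty sets and $a_0\in X$, the perturbed alternating projections sequences are $b_n=P_{B_n}(a_{n-1})$, $a_n=P_{A_n}(b_n)$ ($n\in\mathbb N$). The couple $(U,V)$ is stable if for every choice of sequences $\{A_n\},\{B_n\}$ of closed convex nonempty sets converging in the Attouch–Wets sense to $U$ and $V$ respectively, and every $a_0\in X$, the corresponding perturbed alternating projections sequences $\{a_n\}$ and $\{b_n\}$ converge in norm. *)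

theory Defs
  imports "HOL-Analysis.Analysis"
begin

definition metric_proj :: "'a::{real_inner,complete_space} set \<Rightarrow> 'a \<Rightarrow> 'a" where
  "metric_proj C x = (SOME y. y \<in> C \<and> (\<forall>z\<in>C. dist x y \<le> dist x z))"

definition aw_excess :: "nat \<Rightarrow> 'a::real_normed_vector set \<Rightarrow> 'a set \<Rightarrow> real" where
  "aw_excess N C D =
     (if C \<inter> cball 0 (real N) = {} then 0
      else (SUP c\<in>C \<inter> cball 0 (real N). infdist c D))"

definition aw_dist :: "nat \<Rightarrow> 'a::real_normed_vector set \<Rightarrow> 'a set \<Rightarrow> real" where
  "aw_dist N C D = max (aw_excess N C D) (aw_excess N D C)"

definition aw_converges :: "(nat \<Rightarrow> 'a::real_normed_vector set) \<Rightarrow> 'a set \<Rightarrow> bool" where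
  "aw_converges Cs C \<longleftrightarrow> (\<forall>N::nat. (\<lambda>j. aw_dist N (Cs j) C) \<longlonglongrightarrow> 0)"

text \<open>Perturbed alternating projections: pap_a A B a0 n = a_n, with a_0 = a0,
  b_n = P_{B n}(a_{n-1}), a_n = P_{A n}(b_n) for n \<ge> 1 (A 0, B 0 are unused).\<close>
primrec pap_a :: "(nat \<Rightarrow> 'a::{real_inner,complete_space} set) \<Rightarrow> (nat \<Rightarrow> 'a set) \<Rightarrow> 'a \<Rightarrow> nat \<Rightarrow> 'a" where
  "pap_a A B a0 0 = a0"
| "pap_a A B a0 (Suc n) = metric_proj (A (Suc n)) (metric_proj (B (Suc n)) (pap_a A B a0 n))"

text \<open>pap_b A B a0 n = b_{n+1} = P_{B (n+1)}(a_n).\<close>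
definition pap_b :: "(nat \<Rightarrow> 'a::{real_inner,complete_space} set) \<Rightarrow> (nat \<Rightarrow> 'a set) \<Rightarrow> 'a \<Rightarrow> nat \<Rightarrow> 'a" where
  "pap_b A B a0 n = metric_proj (B (Suc n)) (pap_a A B a0 n)"

definition stable_couple :: "'a::{real_inner,complete_space} set \<Rightarrow> 'a set \<Rightarrow> bool" where
  "stable_couple U V \<longleftrightarrow>
     (\<forall>A B a0.
        (\<forall>n. closed (A n) \<and> convex (A n) \<and> A n \<noteq> {}) \<longrightarrow>
        (\<forall>n. closed (B n) \<and> convex (B n) \<and> B n \<noteq> {}) \<longrightarrow>
        aw_converges A U \<longrightarrow> aw_converges B V \<longrightarrow>
        convergent (pap_a A B a0) \<and> convergent (pap_b A B a0))"

end

theory Submission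
  imports Defs
begin


lemma norm_add_square_eq:
  fixes a b :: "'a::real_inner"
  shows "norm (a + b)^2 = norm a^2 + norm b^2 + 2 * inner a b"
  using dot_norm[of a b] by simp

lemma sq_bound:
  fixes d t :: real
  assumes "n \<le> d + t" "0 \<le> d" "0 \<le> t" "t \<le> 1" "0 \<le> n"
  shows "n^2 \<le> d^2 + (2*d+1)*t"
proof -
  have "n^2 \<le> (d+t)^2" using assms by (simp add: power_mono)
  moreover have "t*t \<le> 1*t" using assms by (intro mult_right_mono) auto
  ultimately show ?thesis by (simp add: power2_eq_square algebra_simps)
qed

lemma proj_exists:
  fixes C :: "'a::{real_inner,complete_space} set"
  assumes cl: "closed C" and cv: "convex C" and ne: "C \<noteq> {}"
  shows "\<exists>y\<in>C. \<forall>z\<in>C. dist x y \<le> dist x z"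
proof -
  define d where "d = infdist x C"
  have d0: "d \<ge> 0" unfolding d_def by (rule infdist_nonneg)
  have dle: "d \<le> dist x z" if "z \<in> C" for z unfolding d_def using that by (rule infdist_le)
  have "\<exists>z\<in>C. dist x z < d + 1/(real n+1)" for n
  proof -
    have "infdist x C < d + 1/(real n+1)" unfolding d_def by (simp add: add_pos_pos)
    then have "(INF a\<in>C. dist x a) < d + 1/(real n+1)" using infdist_notempty[OF ne] by simp
    then show ?thesis using ne by (subst (asm) cINF_less_iff) (auto intro: bdd_belowI[of _ 0])
  qed
  then obtain z where zC: "\<And>n. z n \<in> C" and zd: "\<And>n. dist x (z n) < d + 1/(real n+1)"
    by metis
  have key: "norm (z m - z n)^2 \<le> 2*((2*d+1) * (1/(real m+1))) + 2*((2*d+1)*(1/(real n+1)))" for m n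
  proof -
    define a where "a = x - z m"
    define b where "b = x - z n"
    have par: "norm (a - b)^2 + norm (a + b)^2 = 2*norm a^2 + 2*norm b^2"
      by (simp add: power2_norm_eq_inner inner_add inner_diff inner_commute)
    have mid: "(1/2) *\<^sub>R z m + (1/2) *\<^sub>R z n \<in> C"
      using cv zC unfolding convex_def by (metis add_divide_distrib divide_self_if one_add_one zero_le_divide_1_iff zero_le_numeral zero_neq_numeral)
    have "a + b = 2 *\<^sub>R (x - ((1/2) *\<^sub>R z m + (1/2) *\<^sub>R z n))"
      unfolding a_def b_def by (simp add: algebra_simps scaleR_2)
    then have "norm (a+b) = 2 * dist x ((1/2) *\<^sub>R z m + (1/2) *\<^sub>R z n)"
      by (simp add: dist_norm)
    then have ab: "norm (a+b) \<ge> 2*d" using dle[OF mid] by simp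
    have "norm (a+b)^2 \<ge> (2*d)^2" by (rule power_mono[OF ab]) (use d0 in simp)
    have tm: "1/(real m+1) \<le> 1" and tn: "1/(real n+1) \<le> 1" by auto
    have tm0: "1/(real m+1) \<ge> 0" and tn0: "1/(real n+1) \<ge> 0" by auto
    have na: "norm a \<le> d + 1/(real m+1)" using zd[of m] by (simp add: a_def dist_norm)
    have nb: "norm b \<le> d + 1/(real n+1)" using zd[of n] by (simp add: b_def dist_norm)
    have a2: "norm a^2 \<le> d^2 + (2*d+1)*(1/(real m+1))"
      by (rule sq_bound[OF na d0 tm0 tm]) simp
    have b2: "norm b^2 \<le> d^2 + (2*d+1)*(1/(real n+1))"
      by (rule sq_bound[OF nb d0 tn0 tn]) simp
    have "a - b = z n - z m" unfolding a_def b_def by simp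
    then have "norm (z m - z n) = norm (a - b)" by (simp add: norm_minus_commute)
    then have "norm (z m - z n)^2 = 2*norm a^2 + 2*norm b^2 - norm (a+b)^2" using par by simp
    moreover have "(2*d)^2 = 4*d^2" by simp
    ultimately show ?thesis using a2 b2 \<open>norm (a+b)^2 \<ge> (2*d)^2\<close>
      by linarith
  qed
  have "Cauchy z"
  proof (rule CauchyI)
    fix e :: real assume e: "e > 0"
    obtain M :: nat where M0: "(4*d+2) * 2 / e^2 < real M"
      using reals_Archimedean2 by blast
    then have M: "(4*d+2) * 2 / e^2 < real M + 1" by linarith
    show "\<exists>M. \<forall>m\<ge>M. \<forall>n\<ge>M. norm (z m - z n) < e"
    proof (intro exI allI impI)
      fix m n assume mM: "m \<ge> M" and nM: "n \<ge> M"
      have "1/(real m+1) \<le> 1/(real M+1)" using mM by (simp add: frac_le)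
      then have 1: "(2*d+1) * (1/(real m+1)) \<le> (2*d+1) * (1/(real M+1))"
        by (rule mult_left_mono) (use d0 in simp)
      have "1/(real n+1) \<le> 1/(real M+1)" using nM by (simp add: frac_le)
      then have 2: "(2*d+1) * (1/(real n+1)) \<le> (2*d+1) * (1/(real M+1))"
        by (rule mult_left_mono) (use d0 in simp)
      have "norm (z m - z n)^2 \<le> 4 * ((2*d+1) * (1/(real M+1)))"
        using key[of m n] 1 2 by linarith
      also have "\<dots> < e^2"
        using M e by (simp add: field_simps)
      finally show "norm (z m - z n) < e" using e by (simp add: power_less_imp_less_base)
    qed
  qed
  then obtain y where y: "z \<longlonglongrightarrow> y" using Cauchy_convergent_iff convergent_def by blast
  have yC: "y \<in> C" using cl zC y closed_sequentially by blast
  have "(\<lambda>n. dist x (z n)) \<longlonglongrightarrow> dist x y" using y by (intro tendsto_intros)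
  moreover have "(\<lambda>n. d + 1/(real n+1)) \<longlonglongrightarrow> d + 0"
  proof (intro tendsto_intros)
    show "(\<lambda>n. 1/(real n+1)) \<longlonglongrightarrow> 0"
      using LIMSEQ_inverse_real_of_nat by (simp add: inverse_eq_divide add.commute)
  qed
  ultimately have "dist x y \<le> d + 0" using zd by (intro LIMSEQ_le) (auto intro: less_imp_le)
  then have yd: "dist x y \<le> d" by simp
  show ?thesis
  proof (intro bexI[OF _ yC] ballI)
    fix z assume "z \<in> C"
    then show "dist x y \<le> dist x z" using yd dle[of z] by linarith
  qed
qed

lemma mp_basic:
  fixes C :: "'a::{real_inner,complete_space} set"
  assumes "closed C" "convex C" "C \<noteq> {}"
  shows "metric_proj C x \<in> C" and "\<And>z. z \<in> C \<Longrightarrow> dist x (metric_proj C x) \<le> dist x z"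
proof -
  have "\<exists>y. y \<in> C \<and> (\<forall>z\<in>C. dist x y \<le> dist x z)" using proj_exists[OF assms] by blast
  then have "metric_proj C x \<in> C \<and> (\<forall>z\<in>C. dist x (metric_proj C x) \<le> dist x z)"
    unfolding metric_proj_def by (rule someI_ex)
  then show "metric_proj C x \<in> C" and "\<And>z. z \<in> C \<Longrightarrow> dist x (metric_proj C x) \<le> dist x z" by auto
qed

lemma mp_var:
  fixes C :: "'a::{real_inner,complete_space} set"
  assumes cl: "closed C" and cv: "convex C" and ne: "C \<noteq> {}" and z: "z \<in> C"
  shows "inner (x - metric_proj C x) (z - metric_proj C x) \<le> 0"
proof (rule ccontr)
  define p where "p = metric_proj C x"
  have pC: "p \<in> C" and pmin: "\<And>z. z \<in> C \<Longrightarrow> dist x p \<le> dist x z"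
    using mp_basic[OF cl cv ne] unfolding p_def by auto
  define s where "s = inner (x - p) (z - p)"
  define q where "q = norm (z - p)^2"
  assume "\<not> inner (x - metric_proj C x) (z - metric_proj C x) \<le> 0"
  then have s: "s > 0" unfolding s_def p_def by simp
  then have "z \<noteq> p" unfolding s_def by auto
  then have q: "q > 0" unfolding q_def by simp
  define t where "t = min 1 (s/q)"
  have t0: "t > 0" and t1: "t \<le> 1" and tq: "t * q \<le> s" using s q unfolding t_def by (auto simp: field_simps min_def)
  have "p + t *\<^sub>R (z - p) \<in> C"
  proof -
    have "(1 - t) *\<^sub>R p + t *\<^sub>R z \<in> C" using cv pC z t0 t1 unfolding convex_def by auto
    moreover have "(1 - t) *\<^sub>R p + t *\<^sub>R z = p + t *\<^sub>R (z - p)" by (simp add: algebra_simps)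
    ultimately show ?thesis by simp
  qed
  then have "dist x p \<le> dist x (p + t *\<^sub>R (z - p))" by (rule pmin)
  then have "norm (x - p)^2 \<le> norm ((x - p) - t *\<^sub>R (z - p))^2"
    by (simp add: dist_norm power_mono algebra_simps)
  also have "\<dots> = norm (x - p)^2 - 2 * t * s + t^2 * q"
    unfolding s_def q_def by (simp only: power2_norm_eq_inner) (simp add: inner_diff_left inner_diff_right inner_commute algebra_simps power2_eq_square)
  finally have "2 * t * s \<le> t * (t * q)" by (simp add: power2_eq_square algebra_simps)
  then have "2 * s \<le> t * q" using t0 by simp
  with tq s show False by linarith
qed

lemma mp_nonexp:
  fixes C :: "'a::{real_inner,complete_space} set"
  assumes "closed C" "convex C" "C \<noteq> {}"
  shows "dist (metric_proj C x) (metric_proj C y) \<le> dist x y"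
proof -
  define p where "p = metric_proj C x"
  define q where "q = metric_proj C y"
  have pC: "p \<in> C" "q \<in> C" unfolding p_def q_def using mp_basic[OF assms] by auto
  have 1: "inner (x - p) (q - p) \<le> 0" unfolding p_def q_def using mp_var[OF assms] pC q_def by auto
  have 2: "inner (y - q) (p - q) \<le> 0" unfolding p_def q_def using mp_var[OF assms] pC p_def by auto
  have e: "inner (x - y) (p - q) - norm (p-q)^2 = - inner (x-p) (q-p) - inner (y-q) (p-q)"
    by (simp only: power2_norm_eq_inner inner_diff_left inner_diff_right inner_commute)
  have "norm (p - q)^2 \<le> inner (x - y) (p - q)"
    using 1 2 e by linarith
  also have "\<dots> \<le> norm (x - y) * norm (p - q)" by (rule norm_cauchy_schwarz)
  finally have "norm (p - q) * norm (p - q) \<le> norm (x - y) * norm (p - q)" by (simp add: power2_eq_square)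
  then have "norm (p - q) \<le> norm (x - y)"
    by (cases "norm (p - q) = 0") (auto)
  then show ?thesis unfolding p_def q_def by (simp add: dist_norm)
qed

lemma sub_ccn: "subspace U \<Longrightarrow> convex U \<and> U \<noteq> {}"
  using subspace_imp_convex subspace_0 by blast

lemma mp_orth:
  fixes U :: "'a::{real_inner,complete_space} set"
  assumes "subspace U" "closed U" "u \<in> U"
  shows "inner (x - metric_proj U x) u = 0"
proof -
  have c: "convex U" "U \<noteq> {}" using sub_ccn[OF assms(1)] by auto
  define p where "p = metric_proj U x"
  have pU: "p \<in> U" unfolding p_def using mp_basic[OF assms(2) c] by auto
  have "p + u \<in> U" "p - u \<in> U" using pU assms by (auto intro: subspace_add subspace_diff)
  then have "inner (x - p) ((p + u) - p) \<le> 0" "inner (x - p) ((p - u) - p) \<le> 0"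
    using mp_var[OF assms(2) c, of "p+u" x] mp_var[OF assms(2) c, of "p-u" x] unfolding p_def by auto
  then show ?thesis unfolding p_def by (simp add: inner_diff)
qed

lemma mp_sub:
  fixes U :: "'a::{real_inner,complete_space} set"
  assumes "subspace U" "closed U"
  shows "metric_proj U x \<in> U" and "norm (metric_proj U x) \<le> norm x"
    and "\<And>z. z \<in> U \<Longrightarrow> norm (x - z)^2 = norm (x - metric_proj U x)^2 + norm (metric_proj U x - z)^2"
    and "\<And>z. z \<in> U \<Longrightarrow> dist x (metric_proj U x) \<le> dist x z"
proof -
  have c: "convex U" "U \<noteq> {}" using sub_ccn[OF assms(1)] by auto
  define p where "p = metric_proj U x"
  show pU: "metric_proj U x \<in> U" using mp_basic[OF assms(2) c] by auto
  show "\<And>z. z \<in> U \<Longrightarrow> dist x (metric_proj U x) \<le> dist x z" using mp_basic[OF assms(2) c] by auto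
  show "norm (x - z)^2 = norm (x - metric_proj U x)^2 + norm (metric_proj U x - z)^2" if z: "z \<in> U" for z
  proof -
    have "p - z \<in> U" using pU z assms unfolding p_def by (auto intro: subspace_diff)
    then have o: "inner (x - p) (p - z) = 0" using mp_orth[OF assms] unfolding p_def by auto
    have "x - z = (x - p) + (p - z)" by simp
    have "norm ((x - p) + (p - z))^2 = norm (x - p)^2 + norm (p - z)^2 + 2 * inner (x - p) (p - z)"
      by (rule norm_add_square_eq)
    then have "norm (x - z)^2 = norm (x - p)^2 + norm (p - z)^2 + 2 * inner (x - p) (p - z)"
      by simp
    then show ?thesis using o unfolding p_def by simp
  qed
  have o: "inner (x - p) p = 0" using mp_orth[OF assms pU] unfolding p_def by simp
  then have "norm p ^2 = inner x p" by (simp add: power2_norm_eq_inner inner_diff)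
  also have "\<dots> \<le> norm x * norm p" by (rule norm_cauchy_schwarz)
  finally have "norm p * norm p \<le> norm x * norm p" by (simp add: power2_eq_square)
  then show "norm (metric_proj U x) \<le> norm x" unfolding p_def[symmetric]
    by (cases "norm p = 0") auto
qed



lemma geom_bound:
  fixes S :: "nat \<Rightarrow> 'a::real_normed_vector"
  assumes h: "\<And>n. norm (S (Suc n) - S n) \<le> C * (1/2)^n"
  shows "norm (S (m+k) - S m) \<le> 2*C*(1/2)^m - 2*C*(1/2)^(m+k)"
proof (induction k)
  case 0 then show ?case by simp
next
  case (Suc k)
  have "norm (S (m + Suc k) - S m) \<le> norm (S (Suc (m+k)) - S (m+k)) + norm (S (m+k) - S m)"
    by (metis add_Suc_right norm_triangle_ineq diff_add_cancel add_diff_eq)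
  also have "\<dots> \<le> C*(1/2)^(m+k) + (2*C*(1/2)^m - 2*C*(1/2)^(m+k))"
    using h[of "m+k"] Suc by linarith
  also have "\<dots> = 2*C*(1/2)^m - 2*C*(1/2)^(m + Suc k)" by simp
  finally show ?case .
qed

lemma geom_conv:
  fixes S :: "nat \<Rightarrow> 'a::{real_normed_vector,complete_space}"
  assumes h: "\<And>n. norm (S (Suc n) - S n) \<le> C * (1/2)^n"
  shows "convergent S" and "\<And>n. norm (S n - S 0) \<le> 2*C"
proof -
  have C0: "C \<ge> 0" using order_trans[OF norm_ge_zero h[of 0]] by simp
  have b: "norm (S (m+k) - S m) \<le> 2*C*(1/2)^m" for m k
  proof -
    have "0 \<le> 2*C*(1/2::real)^(m+k)" using C0 by simp
    then show ?thesis using geom_bound[OF h, of m k] by linarith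
  qed
  show "norm (S n - S 0) \<le> 2*C" for n using b[of 0 n] by simp
  have "Cauchy S"
  proof (rule CauchyI)
    fix e :: real assume e: "e > 0"
    obtain M where M: "(1/2::real)^M < e / (4*C+1)"
      using real_arch_pow_inv[of "e/(4*C+1)" "1/2"] e C0 by auto
    have "4*C*(1/2::real)^M < e"
    proof -
      have "(4*C+1)*(1/2::real)^M < e" using M C0 by (simp add: field_simps)
      moreover have "4*C*(1/2::real)^M \<le> (4*C+1)*(1/2::real)^M" by (simp add: mult_right_mono)
      ultimately show ?thesis by linarith
    qed
    show "\<exists>M. \<forall>m\<ge>M. \<forall>n\<ge>M. norm (S m - S n) < e"
    proof (intro exI allI impI)
      fix m n assume m: "m \<ge> M" and n: "n \<ge> M"
      have 1: "norm (S m - S M) \<le> 2*C*(1/2)^M" using b[of M "m-M"] m by simp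
      have 2: "norm (S n - S M) \<le> 2*C*(1/2)^M" using b[of M "n-M"] n by simp
      have "S m - S n = (S m - S M) - (S n - S M)" by simp
      then have "norm (S m - S n) \<le> norm (S m - S M) + norm (S n - S M)"
        using norm_triangle_ineq4[of "S m - S M" "S n - S M"] by simp
      then show "norm (S m - S n) < e" using 1 2 \<open>4*C*(1/2::real)^M < e\<close> by linarith
    qed
  qed
  then show "convergent S" by (simp add: Cauchy_convergent_iff)
qed

lemma decomp_bound:
  fixes U V :: "'a::{real_inner,complete_space} set"
  assumes sU: "subspace U" and cU: "closed U" and sV: "subspace V" and cV: "closed V"
    and int: "U \<inter> V = {0}" and cW: "closed {u + v | u v. u \<in> U \<and> v \<in> V}"
  shows "\<exists>K>0. \<forall>u\<in>U. \<forall>v\<in>V. norm u \<le> K * norm (u + v)"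
proof -
  define W where "W = {u + v | u v. u \<in> U \<and> v \<in> V}"
  have cW': "closed W" using cW unfolding W_def .
  have Wadd: "w1 + w2 \<in> W" if hw: "w1 \<in> W" "w2 \<in> W" for w1 w2
  proof -
    obtain u1 v1 u2 v2 where "u1 \<in> U" "v1 \<in> V" "u2 \<in> U" "v2 \<in> V" "w1 = u1 + v1" "w2 = u2 + v2"
      using hw unfolding W_def by blast
    then have "u1+u2 \<in> U" "v1+v2 \<in> V" "w1+w2 = (u1+u2)+(v1+v2)"
      using sU sV by (auto simp: subspace_add algebra_simps)
    then show ?thesis unfolding W_def by blast
  qed
  have Wscale: "c *\<^sub>R w \<in> W" if hw: "w \<in> W" for w c
  proof -
    obtain u1 v1 where "u1 \<in> U" "v1 \<in> V" "w = u1 + v1"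
      using hw unfolding W_def by blast
    then have "c *\<^sub>R u1 \<in> U" "c *\<^sub>R v1 \<in> V" "c *\<^sub>R w = c *\<^sub>R u1 + c *\<^sub>R v1"
      using sU sV by (auto simp: subspace_scale scaleR_add_right)
    then show ?thesis unfolding W_def by blast
  qed
  have Wdiff: "w1 - w2 \<in> W" if hw: "w1 \<in> W" "w2 \<in> W" for w1 w2
    using Wadd[OF hw(1) Wscale[OF hw(2), of "-1"]] by simp
  have W0: "0 \<in> W" unfolding W_def using subspace_0[OF sU] subspace_0[OF sV] by force
  define S where "S k = {u + v | u v. u \<in> U \<and> v \<in> V \<and> norm u \<le> real k \<and> norm v \<le> real k}" for k :: nat
  define F where "F k = closure (S k)" for k
  have FW: "F k \<subseteq> W" for k
    unfolding F_def by (rule closure_minimal[OF _ cW']) (auto simp: S_def W_def)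
  have UF: "\<Union>(range F) = W"
  proof
    show "\<Union>(range F) \<subseteq> W" using FW by blast
    show "W \<subseteq> \<Union>(range F)"
    proof
      fix w assume "w \<in> W"
      then obtain u v where uv: "u \<in> U" "v \<in> V" "w = u + v" unfolding W_def by blast
      obtain k :: nat where k: "max (norm u) (norm v) \<le> real k" using real_nat_ceiling_ge by blast
      have "w \<in> S k" unfolding S_def using uv k by auto
      then show "w \<in> \<Union>(range F)" unfolding F_def using closure_subset by blast
    qed
  qed
  have cms: "completely_metrizable_space (top_of_set W)"
    by (rule completely_metrizable_space_closedin[OF completely_metrizable_space_euclidean])
       (simp add: closed_closedin[symmetric] cW')
  have "\<exists>k. top_of_set W interior_of F k \<noteq> {}"
  proof (rule ccontr)
    assume "\<not> (\<exists>k. top_of_set W interior_of F k \<noteq> {})"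
    then have "top_of_set W interior_of \<Union>(range F) = {}"
      by (intro Baire_category_alt) (auto simp: cms F_def intro!: closed_subset FW[unfolded F_def])
    then show False using UF W0 interior_of_topspace[of "top_of_set W"] by simp
  qed
  then obtain k w0 where w0: "w0 \<in> top_of_set W interior_of F k" by blast
  define I where "I = top_of_set W interior_of F k"
  have oI: "openin (top_of_set W) I" unfolding I_def by simp
  have IF: "I \<subseteq> F k" unfolding I_def by (rule interior_of_subset)
  have IW: "I \<subseteq> W" unfolding I_def using interior_of_subset_topspace[of "top_of_set W" "F k"] by simp
  have w0I: "w0 \<in> I" using w0 unfolding I_def .
  obtain r where r: "r > 0" and rball: "\<And>w'. w' \<in> W \<Longrightarrow> dist w' w0 < r \<Longrightarrow> w' \<in> I"
    using oI w0I unfolding openin_euclidean_subtopology_iff by metis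
  have inF: "w' \<in> F k" if hw: "w' \<in> W" "dist w' w0 < r" for w'
    using rball[OF hw] IF by blast
  have w0W: "w0 \<in> W" using w0I IW by blast
  have approx: "\<exists>u\<in>U. \<exists>v\<in>V. norm u \<le> 2*real k \<and> norm v \<le> 2*real k \<and> norm (w - (u+v)) < e"
    if w: "w \<in> W" "norm w < r" and e: "e > 0" for w e
  proof -
    have "w0 + w \<in> F k" using inF[of "w0+w"] Wadd[OF w0W w(1)] w(2) by (simp add: dist_norm)
    then obtain y where y: "y \<in> S k" "dist y (w0 + w) < e/2"
      unfolding F_def closure_approachable using e by (meson half_gt_zero)
    have "w0 \<in> F k" using inF[OF w0W] r by simp
    then obtain y' where y': "y' \<in> S k" "dist y' w0 < e/2"
      unfolding F_def closure_approachable using e by (meson half_gt_zero)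
    obtain u1 v1 where 1: "u1 \<in> U" "v1 \<in> V" "norm u1 \<le> k" "norm v1 \<le> k" "y = u1 + v1"
      using y(1) unfolding S_def by blast
    obtain u2 v2 where 2: "u2 \<in> U" "v2 \<in> V" "norm u2 \<le> k" "norm v2 \<le> k" "y' = u2 + v2"
      using y'(1) unfolding S_def by blast
    show ?thesis
    proof (intro bexI conjI)
      show "u1 - u2 \<in> U" using 1 2 sU by (simp add: subspace_diff)
      show "v1 - v2 \<in> V" using 1 2 sV by (simp add: subspace_diff)
      show "norm (u1 - u2) \<le> 2 * real k" using 1 2 norm_triangle_ineq4[of u1 u2] by linarith
      show "norm (v1 - v2) \<le> 2 * real k" using 1 2 norm_triangle_ineq4[of v1 v2] by linarith
      have "w - ((u1 - u2) + (v1 - v2)) = (w0 + w - y) - (w0 - y')" using 1 2 by (simp add: algebra_simps)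
      then have "norm (w - ((u1 - u2) + (v1 - v2))) \<le> norm (w0 + w - y) + norm (w0 - y')"
        by (metis norm_triangle_ineq4)
      also have "\<dots> < e" using y(2) y'(2) by (simp add: dist_norm norm_minus_commute)
      finally show "norm (w - ((u1 - u2) + (v1 - v2))) < e" .
    qed
  qed
  define M where "M = 4 * real k / r"
  have M0: "M \<ge> 0" unfolding M_def using r by simp
  have scaled: "\<exists>u\<in>U. \<exists>v\<in>V. norm u \<le> M * norm w \<and> norm v \<le> M * norm w \<and> norm (w - (u+v)) < e"
    if w: "w \<in> W" and e: "e > 0" for w e
  proof (cases "w = 0")
    case True
    then show ?thesis using e subspace_0[OF sU] subspace_0[OF sV] by (intro bexI[of _ 0]) auto
  next
    case False
    define l where "l = r / (2 * norm w)"
    have l: "l > 0" unfolding l_def using r False by simp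
    have nw: "norm (l *\<^sub>R w) = r/2" unfolding l_def using False r by simp
    have nwr: "norm (l *\<^sub>R w) < r" using nw r by simp
    obtain u' v' where uv': "u' \<in> U" "v' \<in> V" "norm u' \<le> 2*real k" "norm v' \<le> 2*real k"
        "norm (l *\<^sub>R w - (u'+v')) < l * e"
      using approx[OF Wscale[OF w] nwr mult_pos_pos[OF l e]] by blast
    show ?thesis
    proof (intro bexI conjI)
      show "(1/l) *\<^sub>R u' \<in> U" using uv' sU by (simp add: subspace_scale)
      show "(1/l) *\<^sub>R v' \<in> V" using uv' sV by (simp add: subspace_scale)
      have "2 * real k / l = M * norm w" unfolding l_def M_def using False r by (simp add: field_simps)
      then show "norm ((1/l) *\<^sub>R u') \<le> M * norm w" "norm ((1/l) *\<^sub>R v') \<le> M * norm w"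
        using uv' l by (simp_all add: divide_right_mono field_simps)
      have "w - ((1/l) *\<^sub>R u' + (1/l) *\<^sub>R v') = (1/l) *\<^sub>R (l *\<^sub>R w - (u'+v'))"
        using l by (simp add: algebra_simps)
      then have "norm (w - ((1/l) *\<^sub>R u' + (1/l) *\<^sub>R v')) = norm (l *\<^sub>R w - (u'+v')) / l"
        using l by simp
      also have "\<dots> < e" using uv'(5) l by (simp add: field_simps)
      finally show "norm (w - ((1/l) *\<^sub>R u' + (1/l) *\<^sub>R v')) < e" .
    qed
  qed
  have halving: "\<exists>p. fst p \<in> U \<and> snd p \<in> V \<and> norm (fst p) \<le> M * norm w \<and> norm (snd p) \<le> M * norm w
      \<and> norm (w - (fst p + snd p)) \<le> norm w / 2" if w: "w \<in> W" for w
  proof (cases "w = 0")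
    case True
    then show ?thesis using subspace_0[OF sU] subspace_0[OF sV] by (intro exI[of _ "(0,0)"]) auto
  next
    case False
    then obtain u v where "u \<in> U" "v \<in> V" "norm u \<le> M * norm w" "norm v \<le> M * norm w" "norm (w - (u+v)) < norm w / 2"
      using scaled[OF w, of "norm w / 2"] by auto
    then show ?thesis by (intro exI[of _ "(u,v)"]) auto
  qed
  then have hh: "\<forall>w\<in>W. \<exists>p. fst p \<in> U \<and> snd p \<in> V \<and> norm (fst p) \<le> M * norm w \<and> norm (snd p) \<le> M * norm w
      \<and> norm (w - (fst p + snd p)) \<le> norm w / 2" by blast
  obtain g where g0: "\<forall>w\<in>W. fst (g w) \<in> U \<and> snd (g w) \<in> V \<and> norm (fst (g w)) \<le> M * norm w \<and> norm (snd (g w)) \<le> M * norm w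
      \<and> norm (w - (fst (g w) + snd (g w))) \<le> norm w / 2"
    using bchoice[OF hh] by blast
  have g: "\<And>w. w \<in> W \<Longrightarrow> fst (g w) \<in> U \<and> snd (g w) \<in> V \<and> norm (fst (g w)) \<le> M * norm w \<and> norm (snd (g w)) \<le> M * norm w
      \<and> norm (w - (fst (g w) + snd (g w))) \<le> norm w / 2"
    using g0 by blast
  have exact: "\<exists>u\<in>U. \<exists>v\<in>V. w = u + v \<and> norm u \<le> 2 * (M * norm w)" if w: "w \<in> W" for w
  proof -
    define h where "h z = z - (fst (g z) + snd (g z))" for z
    define rr where "rr n = (h ^^ n) w" for n
    have rrS: "rr (Suc n) = h (rr n)" for n unfolding rr_def by simp
    have rrW: "rr n \<in> W \<and> norm (rr n) \<le> norm w * (1/2)^n" for n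
    proof (induction n)
      case 0 then show ?case using w by (simp add: rr_def)
    next
      case (Suc n)
      have gW: "fst (g (rr n)) + snd (g (rr n)) \<in> W" using g[of "rr n"] Suc unfolding W_def by blast
      have "rr (Suc n) \<in> W" unfolding rrS h_def using Wdiff[OF _ gW] Suc by blast
      moreover have "norm (rr (Suc n)) \<le> norm w * (1/2)^(Suc n)"
        using g[of "rr n"] Suc unfolding rrS h_def by auto
      ultimately show ?case by simp
    qed
    define a where "a n = fst (g (rr n))" for n
    define b where "b n = snd (g (rr n))" for n
    have aU: "a n \<in> U" and bV: "b n \<in> V" for n using g rrW unfolding a_def b_def by auto
    have an: "norm (a n) \<le> (M * norm w) * (1/2)^n" for n
    proof -
      have "norm (a n) \<le> M * norm (rr n)" using g rrW unfolding a_def by blast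
      also have "\<dots> \<le> M * (norm w * (1/2)^n)" using rrW[of n] M0 by (simp add: mult_left_mono)
      finally show ?thesis by simp
    qed
    have bn: "norm (b n) \<le> (M * norm w) * (1/2)^n" for n
    proof -
      have "norm (b n) \<le> M * norm (rr n)" using g rrW unfolding b_def by blast
      also have "\<dots> \<le> M * (norm w * (1/2)^n)" using rrW[of n] M0 by (simp add: mult_left_mono)
      finally show ?thesis by simp
    qed
    define SA where "SA n = (\<Sum>i<n. a i)" for n
    define SB where "SB n = (\<Sum>i<n. b i)" for n
    have tel: "SA n + SB n = w - rr n" for n
    proof (induction n)
      case 0 then show ?case by (simp add: SA_def SB_def rr_def)
    next
      case (Suc n)
      have "SA (Suc n) + SB (Suc n) = (SA n + SB n) + (a n + b n)" by (simp add: SA_def SB_def algebra_simps)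
      also have "\<dots> = w - rr (Suc n)" using Suc by (simp add: rrS h_def a_def b_def algebra_simps)
      finally show ?case .
    qed
    have hA: "norm (SA (Suc n) - SA n) \<le> (M * norm w) * (1/2)^n" for n using an by (simp add: SA_def)
    have hB: "norm (SB (Suc n) - SB n) \<le> (M * norm w) * (1/2)^n" for n using bn by (simp add: SB_def)
    obtain u where u: "SA \<longlonglongrightarrow> u" using geom_conv(1)[OF hA] convergent_def by blast
    obtain v where v: "SB \<longlonglongrightarrow> v" using geom_conv(1)[OF hB] convergent_def by blast
    have "(\<lambda>n. norm w * (1/2::real)^n) \<longlonglongrightarrow> norm w * 0"
      by (rule tendsto_mult_left[OF LIMSEQ_realpow_zero]) auto
    then have lim0: "(\<lambda>n. norm w * (1/2::real)^n) \<longlonglongrightarrow> 0" by simp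
    have ev1: "\<forall>\<^sub>F n in sequentially. (0::real) \<le> norm (rr n)" by (intro always_eventually allI) simp
    have ev2: "\<forall>\<^sub>F n in sequentially. norm (rr n) \<le> norm w * (1/2::real)^n"
      by (intro always_eventually allI) (use rrW in blast)
    have "(\<lambda>n. norm (rr n)) \<longlonglongrightarrow> 0"
      by (rule tendsto_sandwich[OF ev1 ev2 tendsto_const lim0])
    then have "rr \<longlonglongrightarrow> 0" using tendsto_norm_zero_iff by blast
    then have "(\<lambda>n. w - rr n) \<longlonglongrightarrow> w - 0" by (intro tendsto_intros)
    moreover have "(\<lambda>n. SA n + SB n) \<longlonglongrightarrow> u + v" using u v by (intro tendsto_intros)
    ultimately have wuv: "w = u + v" using tel LIMSEQ_unique by force
    have "u \<in> U" using closed_sequentially[OF cU _ u] aU sU unfolding SA_def by (simp add: subspace_sum)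
    moreover have "v \<in> V" using closed_sequentially[OF cV _ v] bV sV unfolding SB_def by (simp add: subspace_sum)
    moreover have "norm u \<le> 2 * (M * norm w)"
    proof (rule LIMSEQ_le_const2[OF tendsto_norm[OF u]])
      have SA0: "SA 0 = 0" by (simp add: SA_def)
      have "norm (SA n) \<le> 2 * (M * norm w)" for n using geom_conv(2)[OF hA, of n] SA0 by simp
      then show "\<exists>N. \<forall>n\<ge>N. norm (SA n) \<le> 2 * (M * norm w)" by blast
    qed
    ultimately show ?thesis using wuv by blast
  qed
  show ?thesis
  proof (intro exI[of _ "2*M+1"] conjI ballI)
    show "2*M+1 > 0" using M0 by simp
    fix u0 v0 assume u0: "u0 \<in> U" and v0: "v0 \<in> V"
    have "u0 + v0 \<in> W" unfolding W_def using u0 v0 by blast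
    then obtain u v where uv: "u \<in> U" "v \<in> V" "u0 + v0 = u + v" "norm u \<le> 2 * (M * norm (u0+v0))"
      using exact by blast
    have "u0 - u = v - v0" using uv(3) by (simp add: algebra_simps)
    moreover have "u0 - u \<in> U" using u0 uv sU by (simp add: subspace_diff)
    moreover have "v - v0 \<in> V" using v0 uv sV by (simp add: subspace_diff)
    ultimately have "u0 - u \<in> U \<inter> V" by simp
    then have "u0 - u = 0" using int by blast
    then have "u0 = u" by simp
    then have "norm u0 \<le> 2 * (M * norm (u0+v0))" using uv(4) by simp
    moreover have "(2*M+1) * norm (u0 + v0) = 2 * (M * norm (u0+v0)) + norm (u0+v0)"
      by (simp add: algebra_simps)
    ultimately show "norm u0 \<le> (2*M+1) * norm (u0 + v0)" using uv(4) norm_ge_zero[of "u0+v0"]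
      by linarith
  qed
qed



lemma aw_near:
  fixes C D :: "'a::real_normed_vector set"
  assumes ex: "aw_excess N C D < e" and c: "c \<in> C" "norm c \<le> real N" and D: "D \<noteq> {}"
  shows "\<exists>d\<in>D. dist c d < e"
proof -
  have ne: "C \<inter> cball 0 (real N) \<noteq> {}" using c by auto
  obtain d0 where d0: "d0 \<in> D" using D by blast
  have bdd: "bdd_above ((\<lambda>c. infdist c D) ` (C \<inter> cball 0 (real N)))"
  proof (rule bdd_aboveI)
    fix y assume "y \<in> (\<lambda>c. infdist c D) ` (C \<inter> cball 0 (real N))"
    then obtain c' where c': "c' \<in> C \<inter> cball 0 (real N)" "y = infdist c' D" by blast
    have "y \<le> dist c' d0" using c' infdist_le[OF d0] by simp
    also have "\<dots> \<le> norm c' + norm d0" unfolding dist_norm by (rule norm_triangle_ineq4)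
    also have "\<dots> \<le> real N + norm d0" using c' by simp
    finally show "y \<le> real N + norm d0" .
  qed
  have "infdist c D \<le> (SUP c\<in>C \<inter> cball 0 (real N). infdist c D)"
    by (rule cSUP_upper[OF _ bdd]) (use c in simp)
  also have "\<dots> = aw_excess N C D" unfolding aw_excess_def using ne by simp
  finally have "infdist c D < e" using ex by linarith
  then have "(INF a\<in>D. dist c a) < e" using infdist_notempty[OF D] by simp
  then show ?thesis using D by (subst (asm) cINF_less_iff) (auto intro: bdd_belowI[of _ 0])
qed

lemma aw_dist_near:
  fixes C D :: "'a::real_normed_vector set"
  assumes "aw_dist N C D < e" "C \<noteq> {}" "D \<noteq> {}"
  shows "\<And>c. c \<in> C \<Longrightarrow> norm c \<le> real N \<Longrightarrow> \<exists>d\<in>D. dist c d < e"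
    and "\<And>d. d \<in> D \<Longrightarrow> norm d \<le> real N \<Longrightarrow> \<exists>c\<in>C. dist d c < e"
  using assms aw_near[of N C D e] aw_near[of N D C e] unfolding aw_dist_def by auto

definition perr :: "real \<Rightarrow> real \<Rightarrow> real" where
  "perr e R = e + 2 * sqrt (e * (R + 1))"

lemma proj_err:
  fixes A U :: "'a::{real_inner,complete_space} set"
  assumes cA: "closed A" "convex A" "A \<noteq> {}" and sU: "subspace U" "closed U"
    and aw: "aw_dist N A U < e" and e: "0 < e" "e \<le> 1" and x: "norm x \<le> R" and RN: "2*R + 1 \<le> real N"
  shows "norm (metric_proj A x - metric_proj U x) \<le> perr e R"
proof -
  have U0: "0 \<in> U" using sU subspace_0 by blast
  have Une: "U \<noteq> {}" using U0 by blast
  have R0: "R \<ge> 0" using x norm_ge_zero order_trans by blast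
  define q where "q = metric_proj U x"
  define p where "p = metric_proj A x"
  have qU: "q \<in> U" and qn: "norm q \<le> norm x" using mp_sub[OF sU] unfolding q_def by auto
  have dq: "dist x q \<le> norm x" using mp_sub(4)[OF sU U0, of x] unfolding q_def by simp
  have "norm q \<le> real N" using qn x RN R0 by linarith
  then obtain q' where q': "q' \<in> A" "dist q q' < e" using aw_dist_near(2)[OF aw cA(3) Une qU] by blast
  have pA: "p \<in> A" and pmin: "\<And>z. z \<in> A \<Longrightarrow> dist x p \<le> dist x z" using mp_basic[OF cA] unfolding p_def by auto
  have "dist x p \<le> dist x q'" using pmin[OF q'(1)] .
  also have "\<dots> \<le> dist x q + dist q q'" by (rule dist_triangle)
  finally have dp: "dist x p < dist x q + e" using q'(2) by linarith
  have "norm p \<le> norm x + dist x p" using norm_triangle_ineq4[of x "x - p"] by (simp add: dist_norm)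
  then have "norm p \<le> real N" using dp dq x RN e by linarith
  then obtain p' where p': "p' \<in> U" "dist p p' < e" using aw_dist_near(1)[OF aw cA(3) Une pA] by blast
  have pyth: "norm (x - p')^2 = norm (x - q)^2 + norm (q - p')^2"
    using mp_sub(3)[OF sU p'(1), of x] unfolding q_def by simp
  have "dist x p' \<le> dist x p + dist p p'" by (rule dist_triangle)
  then have xp': "norm (x - p') \<le> dist x q + 2*e" using dp p'(2) by (simp add: dist_norm)
  have dq0: "dist x q \<ge> 0" by simp
  have "norm (x - p')^2 \<le> (dist x q + 2*e)^2"
    by (rule power_mono[OF xp']) simp
  then have "norm (q - p')^2 \<le> (dist x q + 2*e)^2 - dist x q ^2"
    using pyth by (simp add: dist_norm)
  also have "\<dots> = 4*e*dist x q + 4*e*e" by (simp add: power2_eq_square algebra_simps)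
  also have "\<dots> \<le> 4*e*R + 4*e*1"
  proof -
    have "4*e*dist x q \<le> 4*e*R" using dq x e by (intro mult_left_mono) auto
    moreover have "4*e*e \<le> 4*e*1" using e by (intro mult_left_mono) auto
    ultimately show ?thesis by linarith
  qed
  also have "\<dots> = (2 * sqrt (e * (R + 1)))^2"
    using e R0 by (simp add: power2_eq_square algebra_simps real_sqrt_mult)
  finally have "norm (q - p')^2 \<le> (2 * sqrt (e * (R + 1)))^2" .
  then have qp': "norm (q - p') \<le> 2 * sqrt (e * (R + 1))"
    by (rule power2_le_imp_le) (use e R0 in simp)
  have "norm (p - q) \<le> norm (p - p') + norm (p' - q)"
    by (metis diff_add_cancel add_diff_eq norm_triangle_ineq diff_add_eq)
  also have "\<dots> \<le> e + 2 * sqrt (e * (R + 1))" using p'(2) qp' by (simp add: dist_norm norm_minus_commute)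
  finally show ?thesis unfolding p_def q_def perr_def .
qed

lemma perr_small:
  assumes d: "d > 0" and R: "R \<ge> 0"
  shows "\<exists>e>0. e \<le> 1 \<and> 2 * perr e R \<le> d"
proof -
  define e where "e = min (min 1 (d/4)) (d^2/(64*(R+1)))"
  have e0: "e > 0" unfolding e_def using d R by simp
  have "e \<le> min 1 (d/4)" unfolding e_def by (rule min.cobounded1)
  then have e1a: "e \<le> 1" "e \<le> d/4" by auto
  have e1b: "e \<le> d^2/(64*(R+1))" unfolding e_def by (rule min.cobounded2)
  note e1 = e1a e1b
  have "e * (R+1) \<le> d^2/(64*(R+1)) * (R+1)" using e1(3) R by (intro mult_right_mono) auto
  also have "\<dots> = (d/8)^2" using R by (simp add: field_simps power2_eq_square)
  finally have "sqrt (e * (R+1)) \<le> sqrt ((d/8)^2)" by (rule real_sqrt_le_mono)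
  also have "\<dots> = d/8" using d by simp
  finally have "sqrt (e * (R+1)) \<le> d/8" .
  moreover have "2 * perr e R = 2*e + 4 * sqrt (e * (R+1))" unfolding perr_def by simp
  ultimately have "2 * perr e R \<le> d" using e1(2) by linarith
  then show ?thesis using e0 e1 by blast
qed

lemma contraction:
  fixes U V :: "'a::{real_inner,complete_space} set"
  assumes sU: "subspace U" and cU: "closed U" and sV: "subspace V" and cV: "closed V"
    and int: "U \<inter> V = {0}" and cW: "closed {u + v | u v. u \<in> U \<and> v \<in> V}"
  shows "\<exists>c. 0 \<le> c \<and> c < 1 \<and> (\<forall>x. norm (metric_proj U (metric_proj V x)) \<le> c * norm x)"
proof -
  obtain K0 where K0: "K0 > 0" "\<And>u v. u \<in> U \<Longrightarrow> v \<in> V \<Longrightarrow> norm u \<le> K0 * norm (u + v)"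
    using decomp_bound[OF assms] by blast
  define K where "K = max K0 1"
  have K1: "K \<ge> 1" unfolding K_def by simp
  have Kb: "norm u \<le> K * norm (u + v)" if "u \<in> U" "v \<in> V" for u v
  proof -
    have "K0 * norm (u+v) \<le> K * norm (u+v)" unfolding K_def by (intro mult_right_mono) auto
    then show ?thesis using K0(2)[OF that] by linarith
  qed
  define s where "s = 1 - 1/K^2"
  have s0: "0 \<le> s" and s1: "s < 1" unfolding s_def using K1 by (auto simp: field_simps)
  define c where "c = sqrt s"
  have c0: "0 \<le> c" and c1: "c < 1" unfolding c_def using s0 s1 by auto
  have main: "norm (metric_proj U y)^2 \<le> s * norm y^2" if yV: "y \<in> V" for y
  proof (cases "y = 0")
    case True
    then have "norm (metric_proj U y) \<le> 0" using mp_sub(2)[OF sU cU, of y] by simp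
    then show ?thesis using True by simp
  next
    case False
    define u where "u = metric_proj U y"
    have uU: "u \<in> U" unfolding u_def using mp_sub(1)[OF sU cU] .
    have "inner (y - u) u = 0" unfolding u_def using mp_orth[OF sU cU mp_sub(1)[OF sU cU]] .
    then have "inner u (y - u) = 0" by (simp add: inner_commute)
    then have "inner u y - inner u u = 0" by (simp only: inner_diff_right)
    then have uy: "inner u y = norm u^2" by (simp add: power2_norm_eq_inner)
    show ?thesis
    proof (cases "u = 0")
      case True then show ?thesis using s0 by (simp add: u_def)
    next
      case uF: False
      define t where "t = norm u^2 / norm y^2"
      have ny: "norm y^2 > 0" using False by simp
      have tny: "t * norm y^2 = norm u^2" unfolding t_def using ny by simp
      have "(- t) *\<^sub>R y \<in> V" using subspace_scale[OF sV yV, of "-t"] .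
      then have "norm u \<le> K * norm (u + (- t) *\<^sub>R y)" using Kb[OF uU] by blast
      then have "norm u^2 \<le> (K * norm (u - t *\<^sub>R y))^2" by (intro power_mono) auto
      also have "\<dots> = K^2 * norm (u - t *\<^sub>R y)^2" by (simp add: power_mult_distrib)
      also have "norm (u - t *\<^sub>R y)^2 = norm u^2 - 2 * t * inner u y + t * (t * norm y^2)"
        by (simp only: power2_norm_eq_inner) (simp add: inner_diff_left inner_diff_right inner_commute algebra_simps)
      also have "\<dots> = norm u^2 - t * norm u^2" using uy tny by (simp add: algebra_simps)
      finally have "norm u^2 \<le> K^2 * (norm u^2 * (1 - t))" by (simp add: algebra_simps)
      then have "1 * norm u^2 \<le> (K^2 * (1 - t)) * norm u^2" by (simp add: algebra_simps)
      then have "1 \<le> K^2 * (1 - t)" using uF by (subst (asm) mult_le_cancel_right) auto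
      then have "1/K^2 \<le> 1 - t" using K1 by (simp add: field_simps)
      then have "t \<le> s" unfolding s_def by linarith
      then have "t * norm y^2 \<le> s * norm y^2" using ny by (intro mult_right_mono) auto
      then show ?thesis using tny unfolding u_def by simp
    qed
  qed
  show ?thesis
  proof (intro exI[of _ c] conjI allI c0 c1)
    fix x
    define y where "y = metric_proj V x"
    have yV: "y \<in> V" and yx: "norm y \<le> norm x" unfolding y_def using mp_sub[OF sV cV] by auto
    have "norm (metric_proj U y)^2 \<le> (c * norm y)^2"
      using main[OF yV] s0 by (simp add: c_def power_mult_distrib)
    then have "norm (metric_proj U y) \<le> c * norm y" by (rule power2_le_imp_le) (use c0 in simp)
    also have "\<dots> \<le> c * norm x" using yx c0 by (rule mult_left_mono)
    finally show "norm (metric_proj U (metric_proj V x)) \<le> c * norm x" unfolding y_def .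
  qed
qed



lemma scalar_lemma:
  fixes x :: "nat \<Rightarrow> real"
  assumes x0: "\<And>n. 0 \<le> x n" and c: "0 \<le> c" "c < 1" and bd: "\<And>n. n \<ge> n0 \<Longrightarrow> x n \<le> Bd"
    and step: "\<And>d. d > 0 \<Longrightarrow> \<exists>m. \<forall>n\<ge>m. x (Suc n) \<le> c * x n + d"
  shows "x \<longlonglongrightarrow> 0"
proof (rule LIMSEQ_I)
  fix r :: real assume r: "r > 0"
  have "(1 - c) * r / 2 > 0" using c r by simp
  then obtain m where m: "\<And>n. n \<ge> m \<Longrightarrow> x (Suc n) \<le> c * x n + (1 - c) * r / 2" using step by blast
  define m' where "m' = max m n0"
  have Bd0: "Bd \<ge> 0" using bd[of m'] x0[of m'] unfolding m'_def by simp
  have ind: "x (m' + k) \<le> r/2 + c^k * Bd" for k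
  proof (induction k)
    case 0 then show ?case using bd[of m'] r unfolding m'_def by simp
  next
    case (Suc k)
    have "x (m' + Suc k) = x (Suc (m' + k))" by simp
    also have "\<dots> \<le> c * x (m' + k) + (1 - c) * r / 2" using m[of "m'+k"] unfolding m'_def by simp
    also have "c * x (m' + k) \<le> c * (r/2 + c^k * Bd)" using Suc c by (intro mult_left_mono) auto
    finally have "x (m' + Suc k) \<le> c * (r/2 + c^k * Bd) + (1 - c) * r / 2" by simp
    also have "\<dots> = r/2 + c^(Suc k) * Bd" by (simp add: field_simps)
    finally show ?case .
  qed
  have "r / 2 / (Bd + 1) > 0" using r Bd0 by simp
  then obtain k where k: "c^k < r / 2 / (Bd + 1)" using real_arch_pow_inv c(2) by blast
  have "c^k * Bd \<le> c^k * (Bd + 1)" using c by (intro mult_left_mono) auto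
  also have "\<dots> < r / 2" using k Bd0 by (simp add: field_simps)
  finally have ck: "c^k * Bd < r/2" .
  show "\<exists>no. \<forall>n\<ge>no. norm (x n - 0) < r"
  proof (intro exI allI impI)
    fix n assume n: "n \<ge> m' + k"
    have "x n = x (m' + (n - m'))" using n by simp
    also have "\<dots> \<le> r/2 + c^(n - m') * Bd" by (rule ind)
    also have "c^(n - m') \<le> c^k" using n c by (intro power_decreasing) auto
    then have "c^(n - m') * Bd \<le> c^k * Bd" using Bd0 by (rule mult_right_mono)
    then have "r/2 + c^(n - m') * Bd < r" using ck by linarith
    finally show "norm (x n - 0) < r" using x0[of n] by simp
  qed
qed

theorem corollary4p19:
  fixes U V :: "'a::{real_inner,complete_space} set"
  assumes "subspace U" and "closed U"
    and "subspace V" and "closed V"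
    and "U \<inter> V = {0}"
    and "closed {u + v | u v. u \<in> U \<and> v \<in> V}"
  shows "stable_couple U V"
  unfolding stable_couple_def
proof (intro allI impI)
  note sU = assms(1,2) and sV = assms(3,4)
  have U0: "0 \<in> U" and V0: "0 \<in> V" using assms subspace_0 by auto
  have Une: "U \<noteq> {}" and Vne: "V \<noteq> {}" using U0 V0 by auto
  fix A B :: "nat \<Rightarrow> 'a set" and a0 :: 'a
  assume hA: "\<forall>n. closed (A n) \<and> convex (A n) \<and> A n \<noteq> {}"
     and hB: "\<forall>n. closed (B n) \<and> convex (B n) \<and> B n \<noteq> {}"
     and cA: "aw_converges A U" and cB: "aw_converges B V"
  have hA': "closed (A n)" "convex (A n)" "A n \<noteq> {}" for n using hA by auto
  have hB': "closed (B n)" "convex (B n)" "B n \<noteq> {}" for n using hB by auto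
  obtain c where c: "0 \<le> c" "c < 1" and cT: "\<And>x. norm (metric_proj U (metric_proj V x)) \<le> c * norm x"
    using contraction[OF assms] by blast
  define a where "a = pap_a A B a0"
  define T where "T n x = metric_proj (A n) (metric_proj (B n) x)" for n x
  have aS: "a (Suc n) = T (Suc n) (a n)" for n by (simp add: a_def T_def)
  have Tne: "dist (T n x) (T n y) \<le> dist x y" for n x y
  proof -
    have "dist (T n x) (T n y) \<le> dist (metric_proj (B n) x) (metric_proj (B n) y)"
      unfolding T_def by (rule mp_nonexp[OF hA'])
    also have "\<dots> \<le> dist x y" by (rule mp_nonexp[OF hB'])
    finally show ?thesis .
  qed
  have ev: "\<exists>m. \<forall>n\<ge>m. aw_dist N (A n) U < e \<and> aw_dist N (B n) V < e" if e: "e > 0" for N e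
  proof -
    have "(\<lambda>j. aw_dist N (A j) U) \<longlonglongrightarrow> 0" using cA unfolding aw_converges_def by blast
    then have 1: "\<forall>\<^sub>F j in sequentially. aw_dist N (A j) U < e" using e by (rule order_tendstoD(2))
    have "(\<lambda>j. aw_dist N (B j) V) \<longlonglongrightarrow> 0" using cB unfolding aw_converges_def by blast
    then have 2: "\<forall>\<^sub>F j in sequentially. aw_dist N (B j) V < e" using e by (rule order_tendstoD(2))
    have "\<forall>\<^sub>F j in sequentially. aw_dist N (A j) U < e \<and> aw_dist N (B j) V < e"
      using 1 2 by (rule eventually_conj)
    then show ?thesis unfolding eventually_sequentially by blast
  qed
  have Terr: "norm (T n x) \<le> c * norm x + 2 * perr e R"
    if e: "0 < e" "e \<le> 1" and x: "norm x \<le> R" and RN: "2*R+1 \<le> real N"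
       and dA: "aw_dist N (A n) U < e" and dB: "aw_dist N (B n) V < e" for n N e R x
  proof -
    have 1: "norm (metric_proj (B n) x - metric_proj V x) \<le> perr e R"
      by (rule proj_err[OF hB' sV dB e x RN])
    have 2: "dist (T n x) (metric_proj (A n) (metric_proj V x)) \<le> dist (metric_proj (B n) x) (metric_proj V x)"
      unfolding T_def by (rule mp_nonexp[OF hA'])
    have "norm (metric_proj V x) \<le> R" using mp_sub(2)[OF sV, of x] x by linarith
    then have 3: "norm (metric_proj (A n) (metric_proj V x) - metric_proj U (metric_proj V x)) \<le> perr e R"
      by (rule proj_err[OF hA' sU dA e _ RN])
    define Q where "Q = metric_proj (A n) (metric_proj V x)"
    define R' where "R' = metric_proj U (metric_proj V x)"
    have t1: "norm (T n x) \<le> norm Q + norm (T n x - Q)" by (rule norm_triangle_sub)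
    have t2: "norm Q \<le> norm R' + norm (Q - R')" by (rule norm_triangle_sub)
    have "norm (T n x) \<le> norm (T n x - metric_proj (A n) (metric_proj V x))
        + norm (metric_proj (A n) (metric_proj V x) - metric_proj U (metric_proj V x))
        + norm (metric_proj U (metric_proj V x))"
      using t1 t2 unfolding Q_def R'_def by linarith
    then show ?thesis using 1 2 3 cT[of x] by (simp add: dist_norm)
  qed
  have "1 - c > 0" using c by simp
  then obtain e1 where e1: "e1 > 0" "e1 \<le> 1" "2 * perr e1 1 \<le> 1 - c" using perr_small[of "1 - c" 1] by auto
  obtain n0 where n0: "\<And>n. n \<ge> n0 \<Longrightarrow> aw_dist 3 (A n) U < e1 \<and> aw_dist 3 (B n) V < e1"
    using ev[OF e1(1), of 3] by blast
  have T1: "norm (T (Suc n) y) \<le> 1" if n: "n \<ge> n0" and y: "norm y \<le> 1" for n y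
  proof -
    have "norm (T (Suc n) y) \<le> c * norm y + 2 * perr e1 1"
      using n0[of "Suc n"] n by (intro Terr[OF e1(1,2) y]) auto
    moreover have "c * norm y \<le> c * 1" using y c by (intro mult_left_mono) auto
    ultimately show ?thesis using e1(3) by linarith
  qed
  have stepb: "norm (a (Suc n)) \<le> max 1 (norm (a n))" if n: "n \<ge> n0" for n
  proof (cases "norm (a n) \<le> 1")
    case True
    then show ?thesis using T1[OF n True] aS by simp
  next
    case False
    define x where "x = a n"
    define y where "y = (1 / norm x) *\<^sub>R x"
    have nx: "norm x > 1" using False unfolding x_def by simp
    have xne: "x \<noteq> 0" using nx by (cases "x = 0") auto
    have ny: "norm y = 1" unfolding y_def using xne by simp
    have "x - y = (1 - 1 / norm x) *\<^sub>R x" unfolding y_def by (simp add: algebra_simps)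
    moreover have "0 \<le> 1 - 1/norm x"
    proof -
      have nxp: "norm x > 0" using nx by linarith
      have "1/norm x \<le> 1" using nx nxp by (simp add: divide_le_eq)
      then show ?thesis by linarith
    qed
    ultimately have "norm (x - y) = (1 - 1/norm x) * norm x" by simp
    also have "\<dots> = norm x - 1" using xne by (simp add: field_simps)
    finally have dxy: "dist x y = norm x - 1" by (simp add: dist_norm)
    have "norm (T (Suc n) x) \<le> norm (T (Suc n) y) + dist (T (Suc n) x) (T (Suc n) y)"
      using norm_triangle_sub[of "T (Suc n) x" "T (Suc n) y"] by (simp add: dist_norm)
    also have "\<dots> \<le> 1 + (norm x - 1)" using T1[OF n] ny Tne[of "Suc n" x y] dxy by (intro add_mono) auto
    finally show ?thesis using aS unfolding x_def by simp
  qed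
  define Bd where "Bd = max 1 (norm (a n0))"
  have bdk: "norm (a (n0 + k)) \<le> Bd" for k
  proof (induction k)
    case 0 then show ?case unfolding Bd_def by simp
  next
    case (Suc k)
    have "norm (a (n0 + Suc k)) \<le> max 1 (norm (a (n0 + k)))" using stepb[of "n0 + k"] by simp
    also have "\<dots> \<le> Bd" using Suc unfolding Bd_def by simp
    finally show ?case .
  qed
  have bd: "norm (a n) \<le> Bd" if "n \<ge> n0" for n using bdk[of "n - n0"] that by simp
  have Bd0: "Bd \<ge> 0" unfolding Bd_def by simp
  define N2 where "N2 = nat \<lceil>2*Bd+1\<rceil>"
  have N2: "2*Bd+1 \<le> real N2" unfolding N2_def by linarith
  have stepc: "\<exists>m. \<forall>n\<ge>m. norm (a (Suc n)) \<le> c * norm (a n) + d" if d: "d > 0" for d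
  proof -
    obtain e where e: "e > 0" "e \<le> 1" "2 * perr e Bd \<le> d" using perr_small[OF d Bd0] by blast
    obtain m1 where m1: "\<And>n. n \<ge> m1 \<Longrightarrow> aw_dist N2 (A n) U < e \<and> aw_dist N2 (B n) V < e"
      using ev[OF e(1), of N2] by blast
    show ?thesis
    proof (intro exI allI impI)
      fix n assume n: "n \<ge> max m1 n0"
      have "norm (T (Suc n) (a n)) \<le> c * norm (a n) + 2 * perr e Bd"
        using m1[of "Suc n"] n bd[of n] by (intro Terr[OF e(1,2) _ N2]) auto
      then show "norm (a (Suc n)) \<le> c * norm (a n) + d" using aS e(3) by simp
    qed
  qed
  have "(\<lambda>n. norm (a n)) \<longlonglongrightarrow> 0"
    by (rule scalar_lemma[OF _ c bd stepc]) auto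
  then have alim: "a \<longlonglongrightarrow> 0" by (simp add: tendsto_norm_zero_iff)
  then have convA: "convergent (pap_a A B a0)" unfolding a_def[symmetric] convergent_def by blast
  have bb: "norm (pap_b A B a0 n) \<le> norm (a n) + norm (metric_proj (B (Suc n)) 0)" for n
  proof -
    have "dist (pap_b A B a0 n) (metric_proj (B (Suc n)) 0) \<le> dist (a n) 0"
      unfolding pap_b_def a_def by (rule mp_nonexp[OF hB'])
    then have "norm (pap_b A B a0 n - metric_proj (B (Suc n)) 0) \<le> norm (a n)" by (simp add: dist_norm)
    then show ?thesis using norm_triangle_sub[of "pap_b A B a0 n" "metric_proj (B (Suc n)) 0"]
      by linarith
  qed
  have "pap_b A B a0 \<longlonglongrightarrow> 0"
  proof (rule LIMSEQ_I)
    fix r :: real assume r: "r > 0"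
    obtain m1 where m1: "\<And>n. n \<ge> m1 \<Longrightarrow> norm (a n - 0) < r/2" using LIMSEQ_D[OF alim, of "r/2"] r by auto
    obtain m2 where m2: "\<And>n. n \<ge> m2 \<Longrightarrow> aw_dist 0 (A n) U < r/2 \<and> aw_dist 0 (B n) V < r/2"
      using ev[of "r/2" 0] r by auto
    show "\<exists>no. \<forall>n\<ge>no. norm (pap_b A B a0 n - 0) < r"
    proof (intro exI allI impI)
      fix n assume n: "n \<ge> max m1 m2"
      have "aw_dist 0 (B (Suc n)) V < r/2" using m2[of "Suc n"] n by auto
      then obtain z where z: "z \<in> B (Suc n)" "dist 0 z < r/2"
        using aw_dist_near(2)[OF _ hB'(3) Vne V0] by fastforce
      have "dist 0 (metric_proj (B (Suc n)) 0) \<le> dist 0 z" using mp_basic(2)[OF hB' z(1)] .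
      then have "norm (metric_proj (B (Suc n)) 0) < r/2" using z(2) by (simp add: dist_norm)
      moreover have "norm (a n) < r/2" using m1[of n] n by simp
      ultimately show "norm (pap_b A B a0 n - 0) < r" using bb[of n] by simp
    qed
  qed
  then have convB: "convergent (pap_b A B a0)" unfolding convergent_def by blast
  show "convergent (pap_a A B a0) \<and> convergent (pap_b A B a0)" using convA convB by blast
qed

end
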